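(* For every $n \geq 1$, the number of permutations of $\{1,\ldots,n\}$ having exactly one fixed point equals $D_n$.
   Context: A linear arrangement of $\{1,\ldots,n\}$ is a sequence $a_1\cdots a_n$ in which each of $1,\ldots,n$ appears exactly once. It contains the pattern $ij$ if $a_t=i$ and $a_{t+1}=j$ for some $t$; otherwise it avoids it. $D_n$ is the number of linear arrangements of $\{1,\ldots,n\}$ avoiding all of the patterns $12, 23, \ldots, (n-1)n, n1$. *)

theory Defs
  imports "HOL-Combinatorics.Permutations"
begin

definition linear_arrangement :: "nat \<Rightarrow> nat list \<Rightarrow> bool" where
  "linear_arrangement n xs \<longleftrightarrow> distinct xs \<and> set xs = {1..n}"

definition contains_pattern :: "nat list \<Rightarrow> nat \<Rightarrow> nat \<Rightarrow> bool" where
  "contains_pattern xs i j \<longleftrightarrow> (\<exists>t. Suc t < length xs \<and> xs ! t = i \<and> xs ! Suc t = j)"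

definition cyclic_avoiders :: "nat \<Rightarrow> nat list set" where
  "cyclic_avoiders n = {xs. linear_arrangement n xs
      \<and> (\<forall>i\<in>{1..<n}. \<not> contains_pattern xs i (i + 1))
      \<and> \<not> contains_pattern xs n 1}"

definition D :: "nat \<Rightarrow> nat" where
  "D n = card (cyclic_avoiders n)"

end

theory Submission
  imports Defs "HOL-Combinatorics.Multiset_Permutations"
begin

definition der :: "nat \<Rightarrow> nat" where
  "der m = card {p. p permutes {1..m} \<and> (\<forall>x\<in>{1..m}. p x \<noteq> x)}"

lemma card_der:
  assumes "finite A"
  shows "card {p. p permutes A \<and> (\<forall>x\<in>A. p x \<noteq> x)} = der (card A)"
proof -
  obtain h where h: "bij_betw h A {1..card A}"
    using finite_same_card_bij[of A "{1..card A}"] assms by auto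
  show ?thesis unfolding der_def
    using bij_betw_same_card[OF bij_betw_derangements[OF h]] by simp
qed

lemma fixset_eq:
  assumes "F \<subseteq> A"
  shows "{p. p permutes A \<and> {x\<in>A. p x = x} = F} = {p. p permutes (A - F) \<and> (\<forall>x\<in>A-F. p x \<noteq> x)}"
proof (intro set_eqI iffI)
  fix p assume "p \<in> {p. p permutes A \<and> {x\<in>A. p x = x} = F}"
  then have p: "p permutes A" "{x\<in>A. p x = x} = F" by auto
  have "p permutes (A - F)"
    unfolding permutes_def
  proof (intro conjI allI impI)
    fix x assume "x \<notin> A - F"
    then show "p x = x" using p permutes_not_in[OF p(1)] by blast
  next
    fix y show "\<exists>!x. p x = y" using p(1) unfolding permutes_def by blast
  qed
  then show "p \<in> {p. p permutes (A - F) \<and> (\<forall>x\<in>A-F. p x \<noteq> x)}" using p by auto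
next
  fix p assume "p \<in> {p. p permutes (A - F) \<and> (\<forall>x\<in>A-F. p x \<noteq> x)}"
  then have p: "p permutes (A - F)" "\<forall>x\<in>A-F. p x \<noteq> x" by auto
  have "p permutes A" using permutes_subset[OF p(1)] by blast
  moreover have "{x\<in>A. p x = x} = F" using p permutes_not_in[OF p(1)] assms by blast
  ultimately show "p \<in> {p. p permutes A \<and> {x\<in>A. p x = x} = F}" by auto
qed

lemma card_fixset:
  assumes "finite A" "F \<subseteq> A"
  shows "card {p. p permutes A \<and> {x\<in>A. p x = x} = F} = der (card A - card F)"
  using fixset_eq[OF assms(2)] card_der[of "A - F"] assms
  by (simp add: card_Diff_subset finite_subset)

lemma sum_Pow_card:
  assumes "finite A"
  shows "(\<Sum>F\<in>Pow A. g (card F)) = (\<Sum>k\<le>card A. (card A choose k) * g k)"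
proof -
  have "(\<Sum>F\<in>Pow A. g (card F)) = (\<Sum>k\<in>card ` Pow A. \<Sum>F\<in>{F\<in>Pow A. card F = k}. g (card F))"
    by (rule sum.image_gen) (simp add: assms)
  also have "\<dots> = (\<Sum>k\<in>card ` Pow A. (card A choose k) * g k)"
  proof (rule sum.cong[OF refl])
    fix k
    have "(\<Sum>F\<in>{F\<in>Pow A. card F = k}. g (card F)) = (\<Sum>F\<in>{F\<in>Pow A. card F = k}. g k)"
      by (rule sum.cong) auto
    also have "\<dots> = card {F. F \<subseteq> A \<and> card F = k} * g k" by simp
    finally show "(\<Sum>F\<in>{F\<in>Pow A. card F = k}. g (card F)) = (card A choose k) * g k"
      using n_subsets[OF assms] by simp
  qed
  also have "\<dots> = (\<Sum>k\<le>card A. (card A choose k) * g k)"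
  proof (rule sum.mono_neutral_left)
    show "card ` Pow A \<subseteq> {..card A}" using assms by (auto intro: card_mono)
    show "\<forall>i\<in>{..card A} - card ` Pow A. (card A choose i) * g i = 0"
    proof
      fix i assume i: "i \<in> {..card A} - card ` Pow A"
      then obtain B where "B \<subseteq> A" "card B = i" using obtain_subset_with_card_n[of i A] by auto
      then show "(card A choose i) * g i = 0" using i by auto
    qed
  qed simp
  finally show ?thesis .
qed

lemma fact_der:
  assumes "finite A"
  shows "fact (card A) = (\<Sum>k\<le>card A. (card A choose k) * der (card A - k))"
proof -
  let ?S = "{p. p permutes A}"
  let ?h = "\<lambda>p. {x\<in>A. p x = x}"
  have finS: "finite ?S" using finite_permutations[OF assms] by simp
  have "fact (card A) = card ?S" using card_permutations[OF refl assms] by simp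
  also have "\<dots> = (\<Sum>p\<in>?S. 1)" by simp
  also have "\<dots> = (\<Sum>F\<in>?h ` ?S. \<Sum>p\<in>{p\<in>?S. ?h p = F}. 1)"
    by (rule sum.image_gen[OF finS])
  also have "\<dots> = (\<Sum>F\<in>Pow A. \<Sum>p\<in>{p\<in>?S. ?h p = F}. 1)"
  proof (rule sum.mono_neutral_left)
    show "\<forall>i\<in>Pow A - ?h ` ?S. (\<Sum>p\<in>{p\<in>?S. ?h p = i}. 1) = 0"
    proof
      fix i assume "i \<in> Pow A - ?h ` ?S"
      then have "{p\<in>?S. ?h p = i} = {}" by blast
      then show "(\<Sum>p\<in>{p\<in>?S. ?h p = i}. 1) = 0" by (simp only: sum.empty)
    qed
  qed (auto simp: assms)
  also have "\<dots> = (\<Sum>F\<in>Pow A. der (card A - card F))"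
  proof (rule sum.cong[OF refl])
    fix F assume "F \<in> Pow A"
    then show "(\<Sum>p\<in>{p\<in>?S. ?h p = F}. 1) = der (card A - card F)"
      using card_fixset[OF assms, of F] by simp
  qed
  also have "\<dots> = (\<Sum>k\<le>card A. (card A choose k) * der (card A - k))"
    by (rule sum_Pow_card[OF assms])
  finally show ?thesis .
qed

lemma P_der:
  "card {f. f permutes {1..m} \<and> card {i\<in>{1..m}. f i = i} = 1} = m * der (m - 1)"
proof -
  let ?A = "{1..m::nat}"
  have eq: "{f. f permutes ?A \<and> card {i\<in>?A. f i = i} = 1}
      = (\<Union>x\<in>?A. {f. f permutes ?A \<and> {i\<in>?A. f i = i} = {x}})"
    by (auto simp: card_1_singleton_iff)
  have "card (\<Union>x\<in>?A. {f. f permutes ?A \<and> {i\<in>?A. f i = i} = {x}})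
      = (\<Sum>x\<in>?A. card {f. f permutes ?A \<and> {i\<in>?A. f i = i} = {x}})"
    by (rule card_UN_disjoint) (auto simp: finite_permutations)
  also have "\<dots> = (\<Sum>x\<in>?A. der (m - 1))"
    by (rule sum.cong[OF refl]) (subst card_fixset, auto)
  finally show ?thesis using eq by simp
qed

definition cc :: "nat \<Rightarrow> nat \<Rightarrow> nat" where
  "cc n x = (if x = n then 1 else Suc x)"

fun tys :: "nat \<Rightarrow> nat list \<Rightarrow> nat set" where
  "tys n (x#y#ys) = (if y = cc n x then insert x (tys n (y#ys)) else tys n (y#ys))"
| "tys n _ = {}"

lemma tys_cons:
  "tys n (x#xs) = (if xs \<noteq> [] \<and> hd xs = cc n x then insert x (tys n xs) else tys n xs)"
  by (cases xs) auto

lemma tys_sub: "tys n xs \<subseteq> set (butlast xs)"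
  by (induction n xs rule: tys.induct) auto

lemma tys_finite[simp]: "finite (tys n xs)"
  using tys_sub finite_subset by blast

lemma tys_mem: "z \<in> tys n xs \<longleftrightarrow> (\<exists>t. Suc t < length xs \<and> xs!t = z \<and> xs!Suc t = cc n z)"
proof (induction xs)
  case Nil then show ?case by simp
next
  case (Cons x xs)
  show ?case
  proof
    assume a: "z \<in> tys n (x # xs)"
    show "\<exists>t. Suc t < length (x # xs) \<and> (x # xs) ! t = z \<and> (x # xs) ! Suc t = cc n z"
    proof (cases "xs \<noteq> [] \<and> hd xs = cc n x \<and> z = x")
      case True
      then show ?thesis by (intro exI[of _ 0]) (auto simp: hd_conv_nth)
    next
      case False
      then have "z \<in> tys n xs" using a by (auto simp: tys_cons split: if_splits)
      then obtain t where "Suc t < length xs" "xs!t = z" "xs!Suc t = cc n z"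
        using Cons by auto
      then show ?thesis by (intro exI[of _ "Suc t"]) auto
    qed
  next
    assume "\<exists>t. Suc t < length (x # xs) \<and> (x # xs) ! t = z \<and> (x # xs) ! Suc t = cc n z"
    then obtain t where t: "Suc t < length (x # xs)" "(x # xs) ! t = z" "(x # xs) ! Suc t = cc n z"
      by blast
    show "z \<in> tys n (x # xs)"
    proof (cases t)
      case 0 then show ?thesis using t by (auto simp: tys_cons hd_conv_nth)
    next
      case (Suc t')
      then have "z \<in> tys n xs" using Cons t by auto
      then show ?thesis by (auto simp: tys_cons)
    qed
  qed
qed

lemma tys_append:
  "tys n (xs @ ys) = tys n xs \<union> tys n ys \<union>
     (if xs \<noteq> [] \<and> ys \<noteq> [] \<and> hd ys = cc n (last xs) then {last xs} else {})"
proof (induction xs)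
  case Nil then show ?case by simp
next
  case (Cons x xs)
  show ?case
  proof (cases "xs = []")
    case True then show ?thesis by (simp add: tys_cons)
  next
    case False
    then have "tys n ((x#xs) @ ys) = (if hd xs = cc n x then insert x (tys n (xs @ ys)) else tys n (xs @ ys))"
      by (simp add: tys_cons)
    moreover have "tys n (x#xs) = (if hd xs = cc n x then insert x (tys n xs) else tys n xs)"
      using False by (simp add: tys_cons)
    moreover have "last (x#xs) = last xs" using False by simp
    ultimately show ?thesis using Cons.IH False by (simp only: simp_thms) auto
  qed
qed

lemma tys_split:
  assumes "z \<in> tys n xs"
  shows "\<exists>as bs. xs = as @ z # cc n z # bs"
proof -
  obtain t where t: "Suc t < length xs" "xs!t = z" "xs!Suc t = cc n z"
    using assms tys_mem by blast
  have "xs = take t xs @ xs!t # xs!Suc t # drop (Suc (Suc t)) xs"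
    using t(1) by (metis Cons_nth_drop_Suc Suc_lessD append_take_drop_id)
  then show ?thesis using t by metis
qed

definition ins :: "nat \<Rightarrow> nat list \<Rightarrow> nat list" where
  "ins n ys = concat (map (\<lambda>y. if y = 1 then [n, 1] else [y]) ys)"

lemma ins_Nil[simp]: "ins n [] = []" by (simp add: ins_def)
lemma ins_Cons[simp]: "ins n (y#ys) = (if y = 1 then [n,1] else [y]) @ ins n ys"
  by (simp add: ins_def)
lemma ins_append[simp]: "ins n (xs @ ys) = ins n xs @ ins n ys"
  by (simp add: ins_def)

lemma set_ins: "set (ins n ys) = set ys \<union> (if 1 \<in> set ys then {n} else {})"
  by (induction ys) auto

lemma ins_id: "1 \<notin> set ys \<Longrightarrow> ins n ys = ys"
  by (induction ys) auto

lemma distinct_ins: "distinct ys \<Longrightarrow> n \<notin> set ys \<Longrightarrow> distinct (ins n ys)"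
  by (induction ys) (auto simp: set_ins)

lemma removeAll_ins: "n \<noteq> 1 \<Longrightarrow> n \<notin> set ys \<Longrightarrow> removeAll n (ins n ys) = ys"
  by (induction ys) auto

lemma ins_Nil_iff: "ins n ys = [] \<longleftrightarrow> ys = []"
  by (cases ys) auto

lemma hd_ins: "ys \<noteq> [] \<Longrightarrow> hd (ins n ys) = (if hd ys = 1 then n else hd ys)"
  by (cases ys) auto

lemma tys_ins:
  assumes "set ys \<subseteq> {1..n-1}" "n \<ge> 2"
  shows "tys n (ins n ys) = tys (n-1) ys \<union> (if 1 \<in> set ys then {n} else {})"
  using assms
proof (induction ys)
  case Nil then show ?case by simp
next
  case (Cons y ys)
  have IH: "tys n (ins n ys) = tys (n-1) ys \<union> (if 1 \<in> set ys then {n} else {})"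
    using Cons by auto
  have y: "1 \<le> y" "y \<le> n - 1" using Cons.prems by auto
  let ?p = "if y = 1 then [n,1] else [y]"
  have tp: "tys n ?p = (if y = 1 then {n} else {})" by (auto simp: cc_def)
  have lp: "last ?p = y" "?p \<noteq> []" by auto
  have J: "(ins n ys \<noteq> [] \<and> hd (ins n ys) = cc n y) \<longleftrightarrow> (ys \<noteq> [] \<and> hd ys = cc (n-1) y)"
  proof (cases ys)
    case Nil then show ?thesis by simp
  next
    case (Cons z zs)
    have z: "1 \<le> z" "z \<le> n - 1" using Cons.prems \<open>ys = z # zs\<close> by auto
    show ?thesis using y z \<open>n \<ge> 2\<close> \<open>ys = z # zs\<close> by (auto simp: cc_def)
  qed
  have "tys n (ins n (y#ys)) = tys n (?p @ ins n ys)" by simp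
  also have "\<dots> = tys n ?p \<union> tys n (ins n ys) \<union>
     (if ins n ys \<noteq> [] \<and> hd (ins n ys) = cc n y then {y} else {})"
    by (simp only: tys_append lp simp_thms)
  also have "\<dots> = tys (n-1) (y#ys) \<union> (if 1 \<in> set (y#ys) then {n} else {})"
  proof -
    have e: "tys (n-1) (y#ys) = (if ys \<noteq> [] \<and> hd ys = cc (n-1) y then insert y (tys (n-1) ys) else tys (n-1) ys)"
      by (rule tys_cons)
    show ?thesis unfolding tp IH J e by (cases "y = 1"; cases "1 \<in> set ys"; simp; blast)
  qed
  finally show ?case .
qed


lemma cc_in: "n \<ge> 1 \<Longrightarrow> x \<in> {1..n} \<Longrightarrow> cc n x \<in> {1..n}"
  by (auto simp: cc_def)

lemma tys_map:
  assumes g: "\<forall>x\<in>{1..n}. g x \<in> {1..n}" "inj_on g {1..n}" "\<forall>x\<in>{1..n}. g (cc n x) = cc n (g x)"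
    and "n \<ge> 1"
  shows "set xs \<subseteq> {1..n} \<Longrightarrow> tys n (map g xs) = g ` tys n xs"
proof (induction xs)
  case Nil then show ?case by simp
next
  case (Cons x xs)
  have x: "x \<in> {1..n}" using Cons.prems by auto
  have IH: "tys n (map g xs) = g ` tys n xs" using Cons by auto
  have C: "(map g xs \<noteq> [] \<and> hd (map g xs) = cc n (g x)) \<longleftrightarrow> (xs \<noteq> [] \<and> hd xs = cc n x)"
  proof (cases xs)
    case Nil then show ?thesis by simp
  next
    case (Cons z zs)
    then have z: "z \<in> {1..n}" using \<open>set (x#xs) \<subseteq> {1..n}\<close> by auto
    have "g z = g (cc n x) \<longleftrightarrow> z = cc n x"
      using g(2) z cc_in[OF \<open>n \<ge> 1\<close> x] by (auto dest: inj_onD)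
    then show ?thesis using Cons g(3) x by simp
  qed
  have L: "tys n (map g (x#xs)) = (if map g xs \<noteq> [] \<and> hd (map g xs) = cc n (g x) then insert (g x) (tys n (map g xs)) else tys n (map g xs))"
    by (simp only: list.map tys_cons)
  have R: "tys n (x#xs) = (if xs \<noteq> [] \<and> hd xs = cc n x then insert x (tys n xs) else tys n xs)"
    by (rule tys_cons)
  show ?case unfolding L R C IH by simp
qed

abbreviation "PS n \<equiv> permutations_of_set {1..n::nat}"

definition E :: "nat \<Rightarrow> nat \<Rightarrow> nat" where
  "E n k = card {xs\<in>PS n. card (tys n xs) = k}"

lemma PS_finite: "finite {xs\<in>PS n. P xs}"
  using finite_permutations_of_set[of "{1..n}"] by simp

lemma key_lem:
  assumes "n \<ge> 2" and ys: "ys \<in> PS (n-1)"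
  shows "removeAll n (ins n ys) = ys \<and> ins n ys \<in> PS n \<and> tys n (ins n ys) = insert n (tys (n-1) ys)
      \<and> n \<notin> tys (n-1) ys"
proof -
    have sy: "set ys = {1..n-1}" "distinct ys" using ys by (simp_all add: permutations_of_set_def)
    have nn: "n \<notin> set ys" "1 \<in> set ys" using sy assms by auto
    have "set (ins n ys) = {1..n-1} \<union> {n}" using nn sy(1) by (simp add: set_ins)
    also have "\<dots> = {1..n}" using assms by auto
    finally have s1: "set (ins n ys) = {1..n}" .
    have s2: "distinct (ins n ys)" by (rule distinct_ins[OF sy(2) nn(1)])
    have s3: "tys n (ins n ys) = insert n (tys (n-1) ys)"
    proof -
      have "set ys \<subseteq> {1..n-1}" using sy(1) by (rule eq_refl)
      then have "tys n (ins n ys) = tys (n-1) ys \<union> (if 1 \<in> set ys then {n} else {})"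
        by (rule tys_ins[OF _ assms(1)])
      also have "\<dots> = tys (n-1) ys \<union> {n}" using nn(2) by (simp only: if_P)
      finally show ?thesis by (simp only: Un_insert_right sup_bot_right)
    qed
    have s4: "n \<notin> tys (n-1) ys" using tys_sub[of "n-1" ys] nn(1) in_set_butlastD by (meson subsetD)
    have s5: "removeAll n (ins n ys) = ys" using removeAll_ins[of n ys] nn assms by simp
    have s6: "ins n ys \<in> PS n" using s1 s2 by (simp add: permutations_of_set_def)
    show ?thesis using s3 s4 s5 s6 by (intro conjI)
qed

lemma key2_lem:
  assumes "n \<ge> 2" and xs: "xs \<in> PS n" "n \<in> tys n xs"
  shows "removeAll n xs \<in> PS (n-1) \<and> ins n (removeAll n xs) = xs"
proof -
  have sx: "set xs = {1..n}" "distinct xs" using xs by (simp_all add: permutations_of_set_def)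
  obtain as bs where ab0: "xs = as @ n # cc n n # bs" using tys_split[OF xs(2)] by blast
  have c1: "cc n n = 1" by (simp add: cc_def)
  have ab: "xs = as @ n # 1 # bs" using ab0 c1 by simp
  have dd: "distinct (as @ n # 1 # bs)" using sx(2) ab by simp
  have d: "n \<notin> set as" "n \<notin> set bs" "1 \<notin> set as" "1 \<notin> set bs" "n \<noteq> 1"
    using dd assms(1) by auto
  have r: "removeAll n xs = as @ 1 # bs" unfolding ab using d by simp
  have "ins n (removeAll n xs) = xs" unfolding r ab using d by (simp add: ins_id)
  moreover have "set (removeAll n xs) = {1..n-1}"
  proof -
    have "set (removeAll n xs) = {1..n} - {n}" using sx(1) by simp
    also have "\<dots> = {1..n-1}" by auto
    finally show ?thesis .
  qed
  moreover have "distinct (removeAll n xs)" using sx(2) by (simp add: distinct_removeAll)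
  ultimately show ?thesis by (simp add: permutations_of_set_def)
qed

lemma delete_n:
  assumes "n \<ge> 2" "k \<ge> 1"
  shows "card {xs\<in>PS n. card (tys n xs) = k \<and> n \<in> tys n xs} = E (n-1) (k-1)"
proof -
  let ?A = "{ys\<in>PS (n-1). card (tys (n-1) ys) = k-1}"
  let ?B = "{xs\<in>PS n. card (tys n xs) = k \<and> n \<in> tys n xs}"
  have "bij_betw (ins n) ?A ?B"
  proof (rule bij_betw_byWitness[where f'="removeAll n"])
    show "\<forall>a\<in>?A. removeAll n (ins n a) = a" using key_lem[OF assms(1)] by simp
    show "\<forall>a'\<in>?B. ins n (removeAll n a') = a'" using key2_lem[OF assms(1)] by simp
    show "ins n ` ?A \<subseteq> ?B"
    proof
      fix x assume "x \<in> ins n ` ?A"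
      then obtain ys where ys: "ys \<in> PS (n-1)" "card (tys (n-1) ys) = k-1" "x = ins n ys" by blast
      have k: "tys n x = insert n (tys (n-1) ys)" "n \<notin> tys (n-1) ys" "x \<in> PS n"
        using key_lem[OF assms(1) ys(1)] ys(3) by simp_all
      have "card (tys n x) = k" using k(1,2) ys(2) assms(2) by simp
      then show "x \<in> ?B" using k by simp
    qed
    show "removeAll n ` ?B \<subseteq> ?A"
    proof
      fix y assume "y \<in> removeAll n ` ?B"
      then obtain xs where xs: "xs \<in> PS n" "card (tys n xs) = k" "n \<in> tys n xs" "y = removeAll n xs" by blast
      then have y: "y \<in> PS (n-1)" "ins n y = xs" using key2_lem[OF assms(1)] by simp_all
      have k: "tys n xs = insert n (tys (n-1) y)" "n \<notin> tys (n-1) y"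
        using key_lem[OF assms(1) y(1)] y(2) by simp_all
      have "card (tys (n-1) y) = k - 1" using k xs(2) by simp
      then show "y \<in> ?A" using y by simp
    qed
  qed
  then show ?thesis unfolding E_def by (simp add: bij_betw_same_card)
qed


lemma cc_inj: "inj_on (cc n) {1..n}"
  unfolding inj_on_def cc_def by auto

lemma G_in: assumes "n \<ge> 1" "x \<in> {1..n}" shows "(cc n ^^ j) x \<in> {1..n}"
proof (induction j)
  case 0 then show ?case using assms by simp
next
  case (Suc j) then show ?case using cc_in[OF assms(1)] by simp
qed

lemma G_inj: "n \<ge> 1 \<Longrightarrow> inj_on (cc n ^^ j) {1..n}"
proof (induction j)
  case 0 then show ?case by simp
next
  case (Suc j)
  have "(cc n ^^ j) ` {1..n} \<subseteq> {1..n}" using G_in[OF Suc.prems] by blast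
  then have "inj_on (cc n) ((cc n ^^ j) ` {1..n})" using cc_inj inj_on_subset by blast
  then have "inj_on (cc n \<circ> (cc n ^^ j)) {1..n}" by (rule comp_inj_on[OF Suc.IH[OF Suc.prems]])
  then show ?case by (simp add: comp_def)
qed

lemma G_comm: "(cc n ^^ j) (cc n x) = cc n ((cc n ^^ j) x)"
  by (simp add: funpow_swap1)

lemma G_val: "1 \<le> i \<Longrightarrow> i + j \<le> n \<Longrightarrow> (cc n ^^ j) i = i + j"
  by (induction j) (auto simp: cc_def)

lemma G_n: assumes "1 \<le> i" "i \<le> n" shows "(cc n ^^ i) n = i"
proof -
  obtain m where m: "i = Suc m" using assms by (cases i) auto
  have "(cc n ^^ i) n = (cc n ^^ m) (cc n n)" unfolding m funpow_Suc_right by simp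
  also have "\<dots> = (cc n ^^ m) 1" by (simp add: cc_def)
  also have "\<dots> = 1 + m" by (rule G_val) (use assms m in auto)
  finally show ?thesis using m by simp
qed

lemma rot_le:
  fixes g :: "nat \<Rightarrow> nat"
  assumes g: "\<forall>x\<in>{1..n}. g x \<in> {1..n}" "inj_on g {1..n}" "\<forall>x\<in>{1..n}. g (cc n x) = cc n (g x)"
    and "n \<ge> 1" "g i = j"
  shows "card {xs\<in>PS n. card (tys n xs) = k \<and> i \<in> tys n xs} \<le> card {xs\<in>PS n. card (tys n xs) = k \<and> j \<in> tys n xs}"
proof (rule card_inj_on_le[where f="map g"])
  show "finite {xs\<in>PS n. card (tys n xs) = k \<and> j \<in> tys n xs}" by (rule PS_finite)
  show "inj_on (map g) {xs\<in>PS n. card (tys n xs) = k \<and> i \<in> tys n xs}"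
  proof (rule inj_onI)
    fix xs ys assume a: "xs \<in> {xs\<in>PS n. card (tys n xs) = k \<and> i \<in> tys n xs}"
      "ys \<in> {xs\<in>PS n. card (tys n xs) = k \<and> i \<in> tys n xs}" "map g xs = map g ys"
    have "set xs = {1..n}" "set ys = {1..n}" using a by (simp_all add: permutations_of_set_def)
    then show "xs = ys" using map_inj_on[OF a(3)] g(2) by simp
  qed
  show "map g ` {xs\<in>PS n. card (tys n xs) = k \<and> i \<in> tys n xs} \<subseteq> {xs\<in>PS n. card (tys n xs) = k \<and> j \<in> tys n xs}"
  proof
    fix y assume "y \<in> map g ` {xs\<in>PS n. card (tys n xs) = k \<and> i \<in> tys n xs}"
    then obtain xs where xs: "xs \<in> PS n" "card (tys n xs) = k" "i \<in> tys n xs" "y = map g xs" by blast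
    have sx: "set xs = {1..n}" "distinct xs" using xs(1) by (simp_all add: permutations_of_set_def)
    have im: "g ` {1..n} = {1..n}" by (rule endo_inj_surj) (use g in auto)
    have "set y = {1..n}" using xs(4) sx(1) im by simp
    moreover have "distinct y" using xs(4) sx g(2) by (simp add: distinct_map)
    moreover have t: "tys n y = g ` tys n xs" using tys_map[OF g(1,2,3) \<open>n \<ge> 1\<close>] xs(4) sx(1) by simp
    moreover have "tys n xs \<subseteq> {1..n}" using tys_sub[of n xs] sx(1) in_set_butlastD by fast
    then have "inj_on g (tys n xs)" using g(2) inj_on_subset by blast
    then have "card (tys n y) = k" using t xs(2) by (simp add: card_image)
    moreover have "j \<in> tys n y" using t xs(3) \<open>g i = j\<close> by blast
    ultimately show "y \<in> {xs\<in>PS n. card (tys n xs) = k \<and> j \<in> tys n xs}"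
      by (simp add: permutations_of_set_def)
  qed
qed

lemma rot_eq:
  assumes "n \<ge> 1" "i \<in> {1..n}"
  shows "card {xs\<in>PS n. card (tys n xs) = k \<and> i \<in> tys n xs} = card {xs\<in>PS n. card (tys n xs) = k \<and> n \<in> tys n xs}"
proof (rule antisym)
  have gi: "(cc n ^^ (n - i)) i = n" using G_val[of i "n-i" n] assms by auto
  show "card {xs\<in>PS n. card (tys n xs) = k \<and> i \<in> tys n xs} \<le> card {xs\<in>PS n. card (tys n xs) = k \<and> n \<in> tys n xs}"
    by (rule rot_le[OF _ G_inj _ assms(1) gi]) (use G_in[OF assms(1)] G_comm assms in auto)
  have gn: "(cc n ^^ i) n = i" using G_n assms by auto
  show "card {xs\<in>PS n. card (tys n xs) = k \<and> n \<in> tys n xs} \<le> card {xs\<in>PS n. card (tys n xs) = k \<and> i \<in> tys n xs}"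
    by (rule rot_le[OF _ G_inj _ assms(1) gn]) (use G_in[OF assms(1)] G_comm assms in auto)
qed


lemma card_ind:
  assumes "finite A" "T \<subseteq> A"
  shows "(\<Sum>i\<in>A. (if i \<in> T then 1 else 0::nat)) = card T"
proof -
  have "(\<Sum>i\<in>A. (if i \<in> T then 1 else 0::nat)) = (\<Sum>i\<in>A \<inter> T. 1)"
    by (rule sum.inter_restrict[OF assms(1), symmetric])
  also have "A \<inter> T = T" using assms(2) by blast
  finally show ?thesis by simp
qed

lemma key_rec:
  assumes "n \<ge> 2" "k \<ge> 1"
  shows "k * E n k = n * E (n-1) (k-1)"
proof -
  let ?S = "{xs\<in>PS n. card (tys n xs) = k}"
  have fS: "finite ?S" by (rule PS_finite)
  have "k * E n k = (\<Sum>xs\<in>?S. k)" unfolding E_def by simp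
  also have "\<dots> = (\<Sum>xs\<in>?S. \<Sum>i\<in>{1..n}. (if i \<in> tys n xs then 1 else 0))"
  proof (rule sum.cong[OF refl])
    fix xs assume xs: "xs \<in> ?S"
    have "set xs = {1..n}" using xs by (simp add: permutations_of_set_def)
    then have "tys n xs \<subseteq> {1..n}" using tys_sub[of n xs] in_set_butlastD by fast
    then show "k = (\<Sum>i\<in>{1..n}. (if i \<in> tys n xs then 1 else 0))"
      using card_ind[of "{1..n}" "tys n xs"] xs by simp
  qed
  also have "\<dots> = (\<Sum>i\<in>{1..n}. \<Sum>xs\<in>?S. (if i \<in> tys n xs then 1 else 0))"
    by (rule sum.swap)
  also have "\<dots> = (\<Sum>i\<in>{1..n::nat}. E (n-1) (k-1))"
  proof (rule sum.cong[OF refl])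
    fix i assume i: "i \<in> {1..n}"
    have "(\<Sum>xs\<in>?S. (if i \<in> tys n xs then 1 else 0::nat)) = (\<Sum>xs\<in>{xs\<in>?S. i \<in> tys n xs}. 1)"
      by (rule sum.inter_filter[OF fS, symmetric])
    also have "{xs\<in>?S. i \<in> tys n xs} = {xs\<in>PS n. card (tys n xs) = k \<and> i \<in> tys n xs}" by blast
    also have "(\<Sum>xs\<in>{xs\<in>PS n. card (tys n xs) = k \<and> i \<in> tys n xs}. 1::nat)
        = card {xs\<in>PS n. card (tys n xs) = k \<and> i \<in> tys n xs}" by simp
    also have "\<dots> = card {xs\<in>PS n. card (tys n xs) = k \<and> n \<in> tys n xs}"
      by (rule rot_eq) (use assms i in auto)
    also have "\<dots> = E (n-1) (k-1)" by (rule delete_n[OF assms])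
    finally show "(\<Sum>xs\<in>?S. (if i \<in> tys n xs then 1 else 0)) = E (n-1) (k-1)" .
  qed
  also have "\<dots> = n * E (n-1) (k-1)" by simp
  finally show ?thesis .
qed


lemma E_closed: "k < n \<Longrightarrow> E n k = (n choose k) * E (n-k) 0"
proof (induction k arbitrary: n)
  case 0 then show ?case by simp
next
  case (Suc k)
  obtain m where m: "n = Suc m" using Suc.prems by (cases n) auto
  have IH: "E m k = (m choose k) * E (m-k) 0" using Suc.IH[of m] Suc.prems m by simp
  have "Suc k * E n (Suc k) = n * E (n-1) k" using key_rec[of n "Suc k"] Suc.prems by simp
  also have "\<dots> = Suc m * (m choose k) * E (m-k) 0" using IH m by (simp add: algebra_simps)
  also have "\<dots> = Suc k * ((n choose Suc k) * E (n - Suc k) 0)"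
  proof -
    have b: "Suc k * (Suc m choose Suc k) = Suc m * (m choose k)" by (rule Suc_times_binomial)
    have "Suc m * (m choose k) * E (m-k) 0 = (Suc k * (Suc m choose Suc k)) * E (m-k) 0"
      by (simp only: b)
    then show ?thesis using m by (simp only: mult.assoc diff_Suc_Suc)
  qed
  finally have "Suc k * E n (Suc k) = Suc k * ((n choose Suc k) * E (n - Suc k) 0)" .
  then show ?case by (simp only: mult_cancel1 nat.distinct simp_thms)
qed

lemma tys_card_lt: "n \<ge> 1 \<Longrightarrow> xs \<in> PS n \<Longrightarrow> card (tys n xs) < n"
proof -
  assume a: "n \<ge> 1" "xs \<in> PS n"
  have sx: "set xs = {1..n}" "distinct xs" using a(2) by (simp_all add: permutations_of_set_def)
  have "length xs = card (set xs)" using distinct_card[OF sx(2)] by simp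
  then have l: "length xs = n" using sx(1) by simp
  have "card (tys n xs) \<le> card (set (butlast xs))" by (rule card_mono[OF _ tys_sub]) simp
  also have "\<dots> \<le> length (butlast xs)" by (rule card_length)
  also have "\<dots> < n" using l a(1) by simp
  finally show ?thesis .
qed

lemma fact_E: "n \<ge> 1 \<Longrightarrow> fact n = (\<Sum>k<n. E n k)"
proof -
  assume n: "n \<ge> 1"
  let ?S = "PS n"
  have fS: "finite ?S" by simp
  have "fact n = card ?S" by simp
  also have "\<dots> = (\<Sum>xs\<in>?S. 1)" by simp
  also have "\<dots> = (\<Sum>k\<in>(\<lambda>xs. card (tys n xs)) ` ?S. \<Sum>xs\<in>{xs\<in>?S. card (tys n xs) = k}. 1)"
    by (rule sum.image_gen[OF fS])
  also have "\<dots> = (\<Sum>k<n. \<Sum>xs\<in>{xs\<in>?S. card (tys n xs) = k}. 1)"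
  proof (rule sum.mono_neutral_left)
    show "(\<lambda>xs. card (tys n xs)) ` ?S \<subseteq> {..<n}" using tys_card_lt[OF n] by auto
    show "\<forall>i\<in>{..<n} - (\<lambda>xs. card (tys n xs)) ` ?S. (\<Sum>xs\<in>{xs\<in>?S. card (tys n xs) = i}. 1) = 0"
    proof
      fix i assume "i \<in> {..<n} - (\<lambda>xs. card (tys n xs)) ` ?S"
      then have "{xs\<in>?S. card (tys n xs) = i} = {}" by blast
      then show "(\<Sum>xs\<in>{xs\<in>?S. card (tys n xs) = i}. 1) = 0" by (simp only: sum.empty)
    qed
  qed simp
  also have "\<dots> = (\<Sum>k<n. E n k)" unfolding E_def by simp
  finally show ?thesis .
qed

lemma avoiders_eq: "cyclic_avoiders n = {xs\<in>PS n. card (tys n xs) = 0}"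
proof (intro set_eqI iffI)
  fix xs assume a: "xs \<in> cyclic_avoiders n"
  then have ps: "xs \<in> PS n" by (simp add: cyclic_avoiders_def linear_arrangement_def permutations_of_set_def)
  have "tys n xs = {}"
  proof (rule ccontr)
    assume "tys n xs \<noteq> {}"
    then obtain z where "z \<in> tys n xs" by blast
    then obtain t where t: "Suc t < length xs" "xs!t = z" "xs!Suc t = cc n z" using tys_mem by blast
    have "z \<in> set xs" using t by (metis Suc_lessD nth_mem)
    then have z: "z \<in> {1..n}" using ps by (simp add: permutations_of_set_def)
    show False
    proof (cases "z = n")
      case True
      then have "contains_pattern xs n 1" using t unfolding contains_pattern_def by (auto simp: cc_def)
      then show False using a by (simp add: cyclic_avoiders_def)
    next
      case False
      then have "contains_pattern xs z (z+1)" using t unfolding contains_pattern_def by (auto simp: cc_def)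
      moreover have "z \<in> {1..<n}" using z False by auto
      ultimately show False using a by (auto simp: cyclic_avoiders_def)
    qed
  qed
  then show "xs \<in> {xs\<in>PS n. card (tys n xs) = 0}" using ps by simp
next
  fix xs assume a: "xs \<in> {xs\<in>PS n. card (tys n xs) = 0}"
  then have ps: "xs \<in> PS n" and e: "tys n xs = {}" by auto
  have la: "linear_arrangement n xs" using ps by (simp add: linear_arrangement_def permutations_of_set_def)
  have 1: "\<not> contains_pattern xs i (i + 1)" if "i \<in> {1..<n}" for i
  proof
    assume "contains_pattern xs i (i + 1)"
    then obtain t where t: "Suc t < length xs" "xs!t = i" "xs!Suc t = i + 1"
      unfolding contains_pattern_def by auto
    have "cc n i = i + 1" using that by (simp add: cc_def)
    then have "i \<in> tys n xs" using tys_mem t by metis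
    then show False using e by simp
  qed
  have 2: "\<not> contains_pattern xs n 1"
  proof
    assume "contains_pattern xs n 1"
    then obtain t where "Suc t < length xs" "xs!t = n" "xs!Suc t = cc n n"
      unfolding contains_pattern_def cc_def by auto
    then have "n \<in> tys n xs" using tys_mem by blast
    then show False using e by simp
  qed
  show "xs \<in> cyclic_avoiders n" using la 1 2 by (simp add: cyclic_avoiders_def)
qed

lemma D_E: "D n = E n 0"
  unfolding D_def E_def avoiders_eq by simp

lemma fact_D: "n \<ge> 1 \<Longrightarrow> fact n = (\<Sum>k<n. (n choose k) * D (n-k))"
proof -
  assume n: "n \<ge> 1"
  have "fact n = (\<Sum>k<n. E n k)" by (rule fact_E[OF n])
  also have "\<dots> = (\<Sum>k<n. (n choose k) * D (n-k))"
  proof (rule sum.cong[OF refl])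
    fix k assume "k \<in> {..<n}"
    then have "E n k = (n choose k) * E (n-k) 0" by (intro E_closed) simp
    then show "E n k = (n choose k) * D (n-k)" by (simp only: D_E)
  qed
  finally show ?thesis .
qed


lemma fact_P:
  assumes n: "n \<ge> 1"
  shows "fact n = (\<Sum>k<n. (n choose k) * card {f. f permutes {1..n-k} \<and> card {i\<in>{1..n-k}. f i = i} = 1})"
proof -
  have "(\<Sum>k<n. (n choose k) * card {f. f permutes {1..n-k} \<and> card {i\<in>{1..n-k}. f i = i} = 1})
      = (\<Sum>k<n. (n choose k) * ((n - k) * der (n - k - 1)))"
    by (simp only: P_der)
  also have "\<dots> = (\<Sum>k<n. n * (((n-1) choose k) * der (n - 1 - k)))"
  proof (rule sum.cong[OF refl])
    fix k
    have "(n choose k) * ((n - k) * der (n - k - 1)) = ((n - k) * (n choose k)) * der (n - k - 1)"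
      by (simp only: mult_ac)
    also have "\<dots> = (n * ((n - 1) choose k)) * der (n - 1 - k)"
    proof -
      have e: "n - k - 1 = n - 1 - k" by simp
      show ?thesis by (simp only: binomial_absorb_comp e)
    qed
    finally show "(n choose k) * ((n - k) * der (n - k - 1)) = n * (((n-1) choose k) * der (n - 1 - k))"
      by (simp only: mult_ac)
  qed
  also have "\<dots> = n * (\<Sum>k<n. ((n-1) choose k) * der (n - 1 - k))"
    by (simp only: sum_distrib_left)
  also have "n * (\<Sum>k<n. ((n-1) choose k) * der (n - 1 - k)) = n * fact (n-1)"
  proof -
    have "{..<n} = {..n-1}" using n by auto
    then have "(\<Sum>k<n. ((n-1) choose k) * der (n - 1 - k)) = (\<Sum>k\<le>n-1. ((n-1) choose k) * der (n - 1 - k))"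
      by simp
    also have "\<dots> = fact (n-1)" using fact_der[of "{1..n-1}"] by simp
    finally show ?thesis by simp
  qed
  also have "n * fact (n-1) = (fact n :: nat)" using fact_reduce[of n, where 'a=nat] n by simp
  finally show ?thesis by simp
qed

lemma uniq:
  fixes X Y :: "nat \<Rightarrow> nat"
  assumes X: "\<And>m. m \<ge> 1 \<Longrightarrow> fact m = (\<Sum>k<m. (m choose k) * X (m-k))"
    and Y: "\<And>m. m \<ge> 1 \<Longrightarrow> fact m = (\<Sum>k<m. (m choose k) * Y (m-k))"
  shows "n \<ge> 1 \<Longrightarrow> X n = Y n"
proof (induction n rule: less_induct)
  case (less n)
  have split: "(\<Sum>k<n. (n choose k) * Z (n-k)) = Z n + (\<Sum>k\<in>{1..<n}. (n choose k) * Z (n-k))" for Z :: "nat \<Rightarrow> nat"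
  proof -
    have "{..<n} = insert 0 {1..<n}" using less.prems by auto
    then show ?thesis by simp
  qed
  have "(\<Sum>k\<in>{1..<n}. (n choose k) * X (n-k)) = (\<Sum>k\<in>{1..<n}. (n choose k) * Y (n-k))"
  proof (rule sum.cong[OF refl])
    fix k assume "k \<in> {1..<n}"
    then have "X (n-k) = Y (n-k)" using less.IH[of "n-k"] by auto
    then show "(n choose k) * X (n-k) = (n choose k) * Y (n-k)" by simp
  qed
  then show ?case using X[OF less.prems] Y[OF less.prems] split[of X] split[of Y] by simp
qed

theorem proposition6p1:
  fixes n :: nat
  assumes "n \<ge> 1"
  shows "card {f. f permutes {1..n} \<and> card {i\<in>{1..n}. f i = i} = 1} = D n"
  using uniq[of "\<lambda>m. card {f. f permutes {1..m} \<and> card {i\<in>{1..m}. f i = i} = 1}" D n] fact_P fact_D assms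
  by blast

end
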